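(* Consider the two-dimensional Poisson regression model with interaction on the design region $\mathcal{X}=[0,\infty)^2$ with parameter vector $\boldsymbol{\beta}=(\beta_0,\beta_1,\beta_2,\beta_{12})^\top$, where $\beta_0\in\mathbb{R}$ is arbitrary, $\beta_1,\beta_2<0$ and $\beta_{12}=0$. Then the design which assigns equal weights $1/4$ to the four settings $\mathbf{x}_0=(0,0)$, $\mathbf{x}_1=(2/|\beta_1|,0)$, $\mathbf{x}_2=(0,2/|\beta_2|)$ and $\mathbf{x}_3=(2/|\beta_1|,2/|\beta_2|)$ is locally $D$-optimal at $\boldsymbol{\beta}$ on $\mathcal{X}$.
   Context: In the two-dimensional Poisson regression model with interaction, an observation $Y$ at setting $\mathbf{x}=(x_1,x_2)$ is Poisson distributed with mean $\lambda(\mathbf{x})=\exp(\mathbf{f}(\mathbf{x})^\top\boldsymbol{\beta})$, where $\mathbf{f}(\mathbf{x})=(1,x_1,x_2,x_1x_2)^\top$ and $\boldsymbol{\beta}=(\beta_0,\beta_1,\beta_2,\beta_{12})^\top$. An (approximate) design $\xi$ on $\mathcal{X}$ is a finite collection of mutually distinct settings $\mathbf{x}_0,\dots,\mathbf{x}_{n-1}\in\mathcal{X}$ with weights $w_i\ge 0$, $\sum_i w_i=1$. Its information matrix is $\mathbf{M}_{\boldsymbol{\beta}}(\xi)=\sum_{i=0}^{n-1} w_i\lambda(\mathbf{x}_i)\mathbf{f}(\mathbf{x}_i)\mathbf{f}(\mathbf{x}_i)^\top$. A design $\xi^*$ is locally $D$-optimal at $\boldsymbol{\beta}$ on $\mathcal{X}$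 if it maximizes $\det\mathbf{M}_{\boldsymbol{\beta}}(\xi)$ over all designs $\xi$ on $\mathcal{X}$. *)

theory Defs
  imports "HOL-Analysis.Analysis"
begin

definition regf :: "real \<times> real \<Rightarrow> real ^ 4" where
  "regf x = vector [1, fst x, snd x, fst x * snd x]"

definition intensity :: "real ^ 4 \<Rightarrow> real \<times> real \<Rightarrow> real" where
  "intensity \<beta> x = exp (regf x \<bullet> \<beta>)"

definition is_design :: "(real \<times> real) set \<Rightarrow> (real \<times> real) set \<Rightarrow> (real \<times> real \<Rightarrow> real) \<Rightarrow> bool" where
  "is_design X S w \<longleftrightarrow> finite S \<and> S \<noteq> {} \<and> S \<subseteq> X \<and> (\<forall>x\<in>S. w x \<ge> 0) \<and> (\<Sum>x\<in>S. w x) = 1"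

definition info_matrix :: "real ^ 4 \<Rightarrow> (real \<times> real) set \<Rightarrow> (real \<times> real \<Rightarrow> real) \<Rightarrow> real ^ 4 ^ 4" where
  "info_matrix \<beta> S w = (\<Sum>x\<in>S. (w x * intensity \<beta> x) *\<^sub>R
      (\<chi> i j. regf x $ i * regf x $ j))"

definition locally_D_optimal :: "real ^ 4 \<Rightarrow> (real \<times> real) set \<Rightarrow> (real \<times> real) set \<Rightarrow> (real \<times> real \<Rightarrow> real) \<Rightarrow> bool" where
  "locally_D_optimal \<beta> X S w \<longleftrightarrow> is_design X S w \<and>
     (\<forall>S' w'. is_design X S' w' \<longrightarrow> det (info_matrix \<beta> S' w') \<le> det (info_matrix \<beta> S w))"

end

theory Submission
  imports Defs
begin

lemma vector_4 [simp]:
 "(vector [x,y,z,u] ::('a::zero)^4)$1 = x"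
 "(vector [x,y,z,u] ::('a::zero)^4)$2 = y"
 "(vector [x,y,z,u] ::('a::zero)^4)$3 = z"
 "(vector [x,y,z,u] ::('a::zero)^4)$4 = u"
  unfolding vector_def by simp_all

lemma det_4:
  "det (A::'a::comm_ring_1^4^4) =
   A$1$1 * (A$2$2 * A$3$3 * A$4$4 + A$2$3 * A$3$4 * A$4$2 + A$2$4 * A$3$2 * A$4$3
          - A$2$2 * A$3$4 * A$4$3 - A$2$3 * A$3$2 * A$4$4 - A$2$4 * A$3$3 * A$4$2)
 - A$1$2 * (A$2$1 * A$3$3 * A$4$4 + A$2$3 * A$3$4 * A$4$1 + A$2$4 * A$3$1 * A$4$3
          - A$2$1 * A$3$4 * A$4$3 - A$2$3 * A$3$1 * A$4$4 - A$2$4 * A$3$3 * A$4$1)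
 + A$1$3 * (A$2$1 * A$3$2 * A$4$4 + A$2$2 * A$3$4 * A$4$1 + A$2$4 * A$3$1 * A$4$2
          - A$2$1 * A$3$4 * A$4$2 - A$2$2 * A$3$1 * A$4$4 - A$2$4 * A$3$2 * A$4$1)
 - A$1$4 * (A$2$1 * A$3$2 * A$4$3 + A$2$2 * A$3$3 * A$4$1 + A$2$3 * A$3$1 * A$4$2
          - A$2$1 * A$3$3 * A$4$2 - A$2$2 * A$3$1 * A$4$3 - A$2$3 * A$3$2 * A$4$1)"
proof -
  have f1: "finite {2::4, 3, 4}" "1 \<notin> {2::4, 3, 4}" by auto
  have f2: "finite {3::4, 4}" "2 \<notin> {3::4, 4}" by auto
  have f3: "finite {4::4}" "3 \<notin> {4::4}" by auto
  show ?thesis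
    unfolding det_def UNIV_4
    unfolding sum_over_permutations_insert[OF f1]
    unfolding sum_over_permutations_insert[OF f2]
    unfolding sum_over_permutations_insert[OF f3]
    unfolding permutes_sing
    by (simp add: sign_swap_id permutation_swap_id permutation_compose sign_compose sign_id swap_id_eq algebra_simps)
qed


definition u0 :: "real \<Rightarrow> real" where "u0 t = exp (-t/2) * (1 - t/2)"
definition u1 :: "real \<Rightarrow> real" where "u1 t = exp (-t/2) * (exp 1 * t/2)"

definition av :: "real \<Rightarrow> real \<Rightarrow> real \<times> real \<Rightarrow> real^4" where
  "av b1 b2 x = vector [u0 (-b1 * fst x) * u0 (-b2 * snd x), u1 (-b1 * fst x) * u0 (-b2 * snd x),
                        u0 (-b1 * fst x) * u1 (-b2 * snd x), u1 (-b1 * fst x) * u1 (-b2 * snd x)]"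

definition Km :: "real \<Rightarrow> real \<Rightarrow> real^4^4" where
  "Km b1 b2 = vector [vector [1, 1/exp 1, 1/exp 1, 1/(exp 1 * exp 1)],
                      vector [0, 2/(exp 1 * (-b1)), 0, 2/(exp 1 * (-b1)) / exp 1],
                      vector [0, 0, 2/(exp 1 * (-b2)), 2/(exp 1 * (-b2)) / exp 1],
                      vector [0, 0, 0, 2/(exp 1 * (-b1)) * (2/(exp 1 * (-b2)))]]"

definition Bm :: "real \<Rightarrow> real \<Rightarrow> real \<Rightarrow> real^4^4" where
  "Bm b0 b1 b2 = exp (b0/2) *\<^sub>R Km b1 b2"

lemma Bm_av:
  assumes "b1 < 0" "b2 < 0"
  shows "Bm b0 b1 b2 *v av b1 b2 x = exp ((regf x \<bullet> vector [b0, b1, b2, 0]) / 2) *\<^sub>R regf x"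
proof -
  obtain x1 x2 where x: "x = (x1, x2)" by (cases x)
  have ex: "exp ((regf x \<bullet> vector [b0, b1, b2, 0]) / 2) = exp (b0/2) * exp (-(-b1*x1)/2) * exp (-(-b2*x2)/2)"
    by (simp add: x regf_def inner_vec_def sum_4 exp_add[symmetric] add_divide_distrib mult.commute)
  have e0: "exp (1::real) \<noteq> 0" by simp
  show ?thesis
    unfolding vec_eq_iff forall_4 ex
    using assms e0
    by (simp add: x Bm_def Km_def av_def u0_def u1_def regf_def matrix_vector_mult_def sum_4 field_simps)
qed

definition Gm :: "real \<Rightarrow> real \<Rightarrow> (real \<times> real) set \<Rightarrow> (real \<times> real \<Rightarrow> real) \<Rightarrow> real^4^4" where
  "Gm b1 b2 S w = (\<Sum>x\<in>S. w x *\<^sub>R (\<chi> i j. av b1 b2 x $ i * av b1 b2 x $ j))"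

lemma outer_conj:
  "(B::real^4^4) ** (c *\<^sub>R (\<chi> i j. a$i * a$j)) ** transpose B = c *\<^sub>R (\<chi> i j. (B *v a)$i * (B *v a)$j)"
  by (simp add: vec_eq_iff matrix_matrix_mult_def transpose_def matrix_vector_mult_def sum_4 algebra_simps)

lemma conj_sum:
  fixes B :: "real^4^4"
  shows "B ** (\<Sum>x\<in>S. f x) ** transpose B = (\<Sum>x\<in>S. B ** f x ** transpose B)"
proof (induction S rule: infinite_finite_induct)
  case (infinite A) then show ?case by (simp add: vec_eq_iff matrix_matrix_mult_def)
next
  case empty then show ?case by (simp add: vec_eq_iff matrix_matrix_mult_def)
next
  case (insert x F)
  have r: "(P + Q) ** (C::real^4^4) = P ** C + Q ** C" for P Q C :: "real^4^4"
    by (simp add: vec_eq_iff matrix_matrix_mult_def sum.distrib[symmetric] algebra_simps)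
  from insert show ?case by (simp add: matrix_add_ldistrib r)
qed

lemma info_factor:
  assumes "b1 < 0" "b2 < 0"
  shows "info_matrix (vector [b0, b1, b2, 0]) S w = Bm b0 b1 b2 ** Gm b1 b2 S w ** transpose (Bm b0 b1 b2)"
proof -
  have "Bm b0 b1 b2 ** Gm b1 b2 S w ** transpose (Bm b0 b1 b2)
     = (\<Sum>x\<in>S. w x *\<^sub>R (\<chi> i j. (Bm b0 b1 b2 *v av b1 b2 x)$i * (Bm b0 b1 b2 *v av b1 b2 x)$j))"
    unfolding Gm_def conj_sum outer_conj ..
  also have "\<dots> = info_matrix (vector [b0, b1, b2, 0]) S w"
    unfolding info_matrix_def
  proof (rule sum.cong[OF refl])
    fix x
    have e: "intensity (vector [b0, b1, b2, 0]) x = exp ((regf x \<bullet> vector [b0, b1, b2, 0]) / 2) * exp ((regf x \<bullet> vector [b0, b1, b2, 0]) / 2)"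
      unfolding intensity_def by (simp add: exp_add[symmetric])
    show "w x *\<^sub>R (\<chi> i j. (Bm b0 b1 b2 *v av b1 b2 x)$i * (Bm b0 b1 b2 *v av b1 b2 x)$j)
        = (w x * intensity (vector [b0, b1, b2, 0]) x) *\<^sub>R (\<chi> i j. regf x $ i * regf x $ j)"
      unfolding Bm_av[OF assms] e
      by (simp add: vec_eq_iff ac_simps)
  qed
  finally show ?thesis by simp
qed


lemma psd_offdiag0:
  fixes b d :: real
  assumes "\<forall>x. b + 2*d*x \<ge> 0" shows "d = 0"
proof (rule ccontr)
  assume "d \<noteq> 0"
  have "b + 2*d*(-(b+1)/(2*d)) \<ge> 0" using assms by blast
  also have "b + 2*d*(-(b+1)/(2*d)) = -1" using \<open>d \<noteq> 0\<close> by (simp add: field_simps)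
  finally show False by simp
qed

lemma had2:
  fixes a b d :: real
  assumes "\<forall>x y. a*x*x + b*y*y + 2*d*x*y \<ge> 0"
  shows "a*b - d*d \<le> a*b" "0 \<le> a" "0 \<le> b"
  using assms[rule_format, of 1 0] assms[rule_format, of 0 1] by auto

lemma had3:
  fixes a b c d e f :: real
  assumes psd: "\<forall>x y z. a*x*x + b*y*y + c*z*z + 2*d*x*y + 2*e*x*z + 2*f*y*z \<ge> 0"
  shows "a*b*c + 2*d*e*f - a*f*f - b*e*e - c*d*d \<le> a*b*c" "0 \<le> a" "0 \<le> b" "0 \<le> c"
proof -
  show a0: "0 \<le> a" "0 \<le> b" "0 \<le> c"
    using psd[rule_format, of 1 0 0] psd[rule_format, of 0 1 0] psd[rule_format, of 0 0 1] by auto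
  show "a*b*c + 2*d*e*f - a*f*f - b*e*e - c*d*d \<le> a*b*c"
  proof (cases "a = 0")
    case True
    have "d = 0" using psd_offdiag0[of b d] psd[rule_format, of _ 1 0] True by (auto simp: algebra_simps)
    moreover have "e = 0" using psd_offdiag0[of c e] psd[rule_format, of _ 0 1] True by (auto simp: algebra_simps)
    ultimately show ?thesis using True by simp
  next
    case False
    then have apos: "a > 0" using a0 by simp
    define pb where "pb = b - d*d/a"
    define pc where "pc = c - e*e/a"
    define pf where "pf = f - d*e/a"
    have eq: "a*b*c + 2*d*e*f - a*f*f - b*e*e - c*d*d = a*(pb*pc - pf*pf)"
      unfolding pb_def pc_def pf_def using apos by (simp add: field_simps; simp add: algebra_simps)
    have "\<forall>y z. pb*y*y + pc*z*z + 2*pf*y*z \<ge> 0"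
    proof (intro allI)
      fix y z
      have "a*(-(d*y+e*z)/a)*(-(d*y+e*z)/a) + b*y*y + c*z*z + 2*d*(-(d*y+e*z)/a)*y
            + 2*e*(-(d*y+e*z)/a)*z + 2*f*y*z \<ge> 0" using psd by blast
      also have "a*(-(d*y+e*z)/a)*(-(d*y+e*z)/a) + b*y*y + c*z*z + 2*d*(-(d*y+e*z)/a)*y
            + 2*e*(-(d*y+e*z)/a)*z + 2*f*y*z = pb*y*y + pc*z*z + 2*pf*y*z"
        unfolding pb_def pc_def pf_def using apos by (simp add: field_simps; simp add: algebra_simps)
      finally show "pb*y*y + pc*z*z + 2*pf*y*z \<ge> 0" .
    qed
    from had2[OF this] have h: "pb*pc - pf*pf \<le> pb*pc" "0 \<le> pb" "0 \<le> pc" by auto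
    have "pb \<le> b" "pc \<le> c" unfolding pb_def pc_def using apos by auto
    then have "pb*pc \<le> b*c" using h by (meson mult_mono order_trans h(3))
    then have "pb*pc - pf*pf \<le> b*c" using h(1) by linarith
    then have "a*(pb*pc - pf*pf) \<le> a*(b*c)" using apos by (simp add: mult_left_mono)
    then show ?thesis using eq by (simp add: mult.assoc)
  qed
qed

definition d4 :: "(4 \<Rightarrow> 4 \<Rightarrow> real) \<Rightarrow> real" where
 "d4 A =
   A 1 1 * (A 2 2 * A 3 3 * A 4 4 + A 2 3 * A 3 4 * A 4 2 + A 2 4 * A 3 2 * A 4 3
          - A 2 2 * A 3 4 * A 4 3 - A 2 3 * A 3 2 * A 4 4 - A 2 4 * A 3 3 * A 4 2)
 - A 1 2 * (A 2 1 * A 3 3 * A 4 4 + A 2 3 * A 3 4 * A 4 1 + A 2 4 * A 3 1 * A 4 3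
          - A 2 1 * A 3 4 * A 4 3 - A 2 3 * A 3 1 * A 4 4 - A 2 4 * A 3 3 * A 4 1)
 + A 1 3 * (A 2 1 * A 3 2 * A 4 4 + A 2 2 * A 3 4 * A 4 1 + A 2 4 * A 3 1 * A 4 2
          - A 2 1 * A 3 4 * A 4 2 - A 2 2 * A 3 1 * A 4 4 - A 2 4 * A 3 2 * A 4 1)
 - A 1 4 * (A 2 1 * A 3 2 * A 4 3 + A 2 2 * A 3 3 * A 4 1 + A 2 3 * A 3 1 * A 4 2
          - A 2 1 * A 3 3 * A 4 2 - A 2 2 * A 3 1 * A 4 3 - A 2 3 * A 3 2 * A 4 1)"

definition qf4 :: "(4 \<Rightarrow> 4 \<Rightarrow> real) \<Rightarrow> real \<Rightarrow> real \<Rightarrow> real \<Rightarrow> real \<Rightarrow> real" where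
 "qf4 A x1 x2 x3 x4 = A 1 1*x1*x1 + A 2 2*x2*x2 + A 3 3*x3*x3 + A 4 4*x4*x4
    + 2*A 1 2*x1*x2 + 2*A 1 3*x1*x3 + 2*A 1 4*x1*x4 + 2*A 2 3*x2*x3 + 2*A 2 4*x2*x4 + 2*A 3 4*x3*x4"

lemma had4:
  fixes A :: "4 \<Rightarrow> 4 \<Rightarrow> real"
  assumes sym: "A 2 1 = A 1 2" "A 3 1 = A 1 3" "A 4 1 = A 1 4" "A 3 2 = A 2 3" "A 4 2 = A 2 4" "A 4 3 = A 3 4"
  and psd: "\<forall>x1 x2 x3 x4. qf4 A x1 x2 x3 x4 \<ge> 0"
  shows "d4 A \<le> A 1 1 * A 2 2 * A 3 3 * A 4 4" "0 \<le> A 1 1" "0 \<le> A 2 2" "0 \<le> A 3 3" "0 \<le> A 4 4"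
proof -
  show a0: "0 \<le> A 1 1" "0 \<le> A 2 2" "0 \<le> A 3 3" "0 \<le> A 4 4"
    using psd[rule_format, of 1 0 0 0] psd[rule_format, of 0 1 0 0]
      psd[rule_format, of 0 0 1 0] psd[rule_format, of 0 0 0 1] by (auto simp: qf4_def)
  show "d4 A \<le> A 1 1 * A 2 2 * A 3 3 * A 4 4"
  proof (cases "A 1 1 = 0")
    case True
    have "A 1 2 = 0" using psd_offdiag0[of "A 2 2" "A 1 2"] psd[rule_format, of _ 1 0 0] True
      by (auto simp: algebra_simps qf4_def)
    moreover have "A 1 3 = 0" using psd_offdiag0[of "A 3 3" "A 1 3"] psd[rule_format, of _ 0 1 0] True
      by (auto simp: algebra_simps qf4_def)
    moreover have "A 1 4 = 0" using psd_offdiag0[of "A 4 4" "A 1 4"] psd[rule_format, of _ 0 0 1] True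
      by (auto simp: algebra_simps qf4_def)
    ultimately show ?thesis using True sym by (simp add: d4_def)
  next
    case False
    then have apos: "A 1 1 > 0" using a0 by simp
    define r where "r = (\<lambda>k l. A k l - A 1 k * A 1 l / A 1 1)"
    have eq: "d4 A = A 1 1 * (r 2 2 * r 3 3 * r 4 4 + 2 * r 2 3 * r 2 4 * r 3 4
        - r 2 2 * r 3 4 * r 3 4 - r 3 3 * r 2 4 * r 2 4 - r 4 4 * r 2 3 * r 2 3)"
      unfolding r_def d4_def using apos sym by (simp add: field_simps; simp add: algebra_simps)
    have "\<forall>y z u. r 2 2*y*y + r 3 3*z*z + r 4 4*u*u + 2*r 2 3*y*z + 2*r 2 4*y*u + 2*r 3 4*z*u \<ge> 0"
    proof (intro allI)
      fix y z u
      have "qf4 A (-(A 1 2*y + A 1 3*z + A 1 4*u)/A 1 1) y z u \<ge> 0" using psd by blast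
      also have "qf4 A (-(A 1 2*y + A 1 3*z + A 1 4*u)/A 1 1) y z u
         = r 2 2*y*y + r 3 3*z*z + r 4 4*u*u + 2*r 2 3*y*z + 2*r 2 4*y*u + 2*r 3 4*z*u"
        unfolding r_def qf4_def using apos by (simp add: field_simps; simp add: algebra_simps)
      finally show "r 2 2*y*y + r 3 3*z*z + r 4 4*u*u + 2*r 2 3*y*z + 2*r 2 4*y*u + 2*r 3 4*z*u \<ge> 0" .
    qed
    from had3[OF this] have h: "r 2 2 * r 3 3 * r 4 4 + 2 * r 2 3 * r 2 4 * r 3 4
        - r 2 2 * r 3 4 * r 3 4 - r 3 3 * r 2 4 * r 2 4 - r 4 4 * r 2 3 * r 2 3 \<le> r 2 2 * r 3 3 * r 4 4"
       "0 \<le> r 2 2" "0 \<le> r 3 3" "0 \<le> r 4 4" by auto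
    have le: "r 2 2 \<le> A 2 2" "r 3 3 \<le> A 3 3" "r 4 4 \<le> A 4 4" unfolding r_def using apos by auto
    have "r 2 2 * r 3 3 \<le> A 2 2 * A 3 3" using h le by (meson mult_mono order_trans)
    then have "r 2 2 * r 3 3 * r 4 4 \<le> A 2 2 * A 3 3 * A 4 4" using h le
      by (meson mult_mono order_trans mult_nonneg_nonneg)
    then have "A 1 1 * (r 2 2 * r 3 3 * r 4 4 + 2 * r 2 3 * r 2 4 * r 3 4
        - r 2 2 * r 3 4 * r 3 4 - r 3 3 * r 2 4 * r 2 4 - r 4 4 * r 2 3 * r 2 3) \<le> A 1 1 * (A 2 2 * A 3 3 * A 4 4)"
      using h(1) apos by (intro mult_left_mono) auto
    then show ?thesis using eq by (simp add: mult.assoc)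
  qed
qed



lemma exp_cubic: "1 + x + x^2/2 + x^3/6 \<le> exp (x::real)"
proof -
  obtain t where "exp x = (\<Sum>m<4. (x ^ m) / fact m) + (exp t / fact 4) * x ^ 4"
    using Maclaurin_exp_le[of x 4] by blast
  moreover have "(\<Sum>m<4. (x ^ m) / fact m) = 1 + x + x^2/2 + x^3/6"
    by (simp add: numeral_eq_Suc fact_numeral lessThan_Suc)
  moreover have "(exp t / fact 4) * x ^ 4 \<ge> 0" by (simp add: zero_le_even_power)
  ultimately show ?thesis by linarith
qed

lemma key_ineq:
  fixes r :: real assumes "0 \<le> r"
  shows "(1-r)^2 + (exp 1)^2 * r^2 \<le> exp (2*r)"
proof -
  define E where "E = exp (1::real)"
  have E2: "2 \<le> E" unfolding E_def using exp_ge_add_one_self[of 1] by simp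
  have E3: "E \<le> 3" unfolding E_def by (rule exp_le)
  have E4: "4 \<le> E^2" using mult_mono[OF E2 E2] E2 by (simp add: power2_eq_square)
  have E9: "E^2 \<le> 9" using mult_mono[OF E3 E3] E2 by (simp add: power2_eq_square)
  have split: "exp (2*r) = E^2 * exp (2*r - 2)"
    unfolding E_def by (simp add: power2_eq_square exp_add[symmetric])
  show ?thesis
  proof (cases "r \<ge> 1")
    case True
    define u where "u = r - 1"
    have u0: "0 \<le> u" using True u_def by simp
    have "1 + 2*u + (2*u)^2/2 \<le> exp (2*u)" using exp_lower_Taylor_quadratic[of "2*u"] u0 by simp
    moreover have "2*r - 2 = 2*u" unfolding u_def by simp
    ultimately have ex: "1 + 2*u + 2*u^2 \<le> exp (2*r - 2)" by (simp add: power2_eq_square)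
    have "(1-r)^2 + E^2 * r^2 = u^2 + E^2*(1 + 2*u + u^2)" unfolding u_def by (simp add: power2_eq_square algebra_simps)
    also have "\<dots> \<le> E^2 * (1 + 2*u + 2*u^2)"
    proof -
      have "1 * u^2 \<le> E^2 * u^2" using E4 by (intro mult_right_mono) auto
      then show ?thesis by (simp add: algebra_simps)
    qed
    also have "\<dots> \<le> E^2 * exp (2*r-2)" using ex by (intro mult_left_mono) auto
    finally show ?thesis using split E_def by simp
  next
    case False
    show ?thesis
    proof (cases "r \<ge> 1/2")
      case True
      define y where "y = 1 - r"
      have y: "0 \<le> y" "y \<le> 1/2" using True False y_def by auto
      have ex: "1 - 2*y + 2*y^2 - 4/3*y^3 \<le> exp (2*r - 2)"
      proof -
        have "1 + (-2*y) + (-2*y)^2/2 + (-2*y)^3/6 \<le> exp (-2*y)" by (rule exp_cubic)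
        moreover have "-2*y = 2*r - 2" unfolding y_def by simp
        moreover have "1 + (-2*y) + (-2*y)^2/2 + (-2*y)^3/6 = 1 - 2*y + 2*y^2 - 4/3*y^3"
          by (simp add: power2_eq_square power3_eq_cube algebra_simps)
        ultimately show ?thesis by simp
      qed
      have "(1-r)^2 + E^2 * r^2 = y^2 + E^2*(1 - 2*y + y^2)" unfolding y_def by (simp add: power2_eq_square algebra_simps)
      also have "\<dots> \<le> E^2 * (1 - 2*y + 2*y^2 - 4/3*y^3)"
      proof -
        have "1 \<le> E^2 * (1 - 4/3*y)"
        proof -
          note E4
          moreover have "1/3 \<le> 1 - 4/3*y" using y by simp
          ultimately have "4 * (1/3) \<le> E^2 * (1 - 4/3*y)" by (intro mult_mono) auto
          then show ?thesis by simp
        qed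
        then have "y^2 * 1 \<le> y^2 * (E^2 * (1 - 4/3*y))" by (intro mult_left_mono) auto
        then show ?thesis by (simp add: power2_eq_square power3_eq_cube algebra_simps)
      qed
      also have "\<dots> \<le> E^2 * exp (2*r-2)" using ex by (intro mult_left_mono) auto
      finally show ?thesis using split E_def by simp
    next
      case False
      have r: "r \<le> 1/2" using False by simp
      have ex: "1 + 2*r + 2*r^2 + 4/3*r^3 \<le> exp (2*r)"
        using exp_cubic[of "2*r"] by (simp add: power2_eq_square power3_eq_cube algebra_simps)
      note E9
      then have "E^2 * r \<le> 9 * r" using assms by (intro mult_right_mono) auto
      then have "E^2 * r^2 \<le> 9 * r^2" using assms by (simp add: power2_eq_square) (metis mult.assoc mult_right_mono)
      moreover have "(1-r)^2 + 9 * r^2 \<le> 1 + 2*r + 2*r^2 + 4/3*r^3"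
      proof -
        have "r*r \<le> r*(1/2)" using r assms by (intro mult_left_mono) auto
        moreover have "0 \<le> r*r*r" using assms by simp
        ultimately show ?thesis by (simp add: power2_eq_square power3_eq_cube algebra_simps)
      qed
      ultimately show ?thesis using ex E_def by simp
    qed
  qed
qed


lemma Gm_entry: "Gm b1 b2 S w $ i $ j = (\<Sum>x\<in>S. w x * (av b1 b2 x $ i * av b1 b2 x $ j))"
  unfolding Gm_def by (simp add: sum_component)

lemma u_sq_le: assumes "0 \<le> t" shows "u0 t ^ 2 + u1 t ^ 2 \<le> 1"
proof -
  have k: "(1 - t/2)^2 + (exp 1)^2 * (t/2)^2 \<le> exp (2*(t/2))" using key_ineq[of "t/2"] assms by simp
  have e: "exp (-t/2) ^ 2 = exp (-t)" by (simp add: power2_eq_square exp_add[symmetric])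
  have "u0 t ^ 2 + u1 t ^ 2 = exp (-t) * ((1 - t/2)^2 + (exp 1)^2 * (t/2)^2)"
    unfolding u0_def u1_def e[symmetric] by (simp add: power2_eq_square algebra_simps)
  also have "\<dots> \<le> exp (-t) * exp t" using k by (intro mult_left_mono) auto
  also have "\<dots> = 1" by (simp add: exp_add[symmetric])
  finally show ?thesis .
qed

lemma av_norm:
  assumes "b1 < 0" "b2 < 0" "0 \<le> fst x" "0 \<le> snd x"
  shows "av b1 b2 x $ 1 * av b1 b2 x $ 1 + av b1 b2 x $ 2 * av b1 b2 x $ 2
       + av b1 b2 x $ 3 * av b1 b2 x $ 3 + av b1 b2 x $ 4 * av b1 b2 x $ 4 \<le> 1"
proof -
  define p where "p = -b1 * fst x"
  define q where "q = -b2 * snd x"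
  have p: "0 \<le> p" "0 \<le> q" unfolding p_def q_def using assms
    by (auto simp: mult_nonpos_nonneg)
  have "av b1 b2 x $ 1 * av b1 b2 x $ 1 + av b1 b2 x $ 2 * av b1 b2 x $ 2
       + av b1 b2 x $ 3 * av b1 b2 x $ 3 + av b1 b2 x $ 4 * av b1 b2 x $ 4
      = (u0 p ^ 2 + u1 p ^ 2) * (u0 q ^ 2 + u1 q ^ 2)"
    unfolding av_def p_def q_def by (simp add: power2_eq_square algebra_simps)
  also have "\<dots> \<le> 1 * 1" using u_sq_le[OF p(1)] u_sq_le[OF p(2)]
    by (intro mult_mono) (auto intro: add_nonneg_nonneg)
  finally show ?thesis by simp
qed

lemma Gm_psd:
  assumes "\<forall>x\<in>S. 0 \<le> w x"
  shows "qf4 (\<lambda>i j. Gm b1 b2 S w $ i $ j) x1 x2 x3 x4 \<ge> 0"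
proof -
  have "qf4 (\<lambda>i j. Gm b1 b2 S w $ i $ j) x1 x2 x3 x4 = (\<Sum>x\<in>S. w x *
     (av b1 b2 x $ 1 * x1 + av b1 b2 x $ 2 * x2 + av b1 b2 x $ 3 * x3 + av b1 b2 x $ 4 * x4)^2)"
    by (simp add: qf4_def Gm_entry sum_distrib_left sum_distrib_right sum.distrib[symmetric] power2_eq_square algebra_simps)
  also have "\<dots> \<ge> 0" using assms by (intro sum_nonneg) auto
  finally show ?thesis .
qed

lemma amgm2: fixes a b :: real shows "a*b \<le> ((a+b)/2)^2"
proof -
  have "0 \<le> (a-b)^2" by simp
  moreover have "((a+b)/2)^2 - a*b = (a-b)^2/4" by (simp add: power2_eq_square field_simps)
  ultimately show ?thesis by linarith
qed

lemma amgm4: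
  fixes a b c d :: real
  assumes "0 \<le> a" "0 \<le> b" "0 \<le> c" "0 \<le> d"
  shows "a*b*c*d \<le> ((a+b+c+d)/4)^4"
proof -
  define P where "P = (a+b)/2"
  define Q where "Q = (c+d)/2"
  have PQ: "0 \<le> P" "0 \<le> Q" unfolding P_def Q_def using assms by auto
  have "a*b*c*d = (a*b)*(c*d)" by (simp add: mult.assoc)
  also have "\<dots> \<le> P^2 * Q^2" unfolding P_def Q_def using assms
    by (intro mult_mono amgm2) auto
  also have "\<dots> = (P*Q)^2" by (simp add: power_mult_distrib)
  also have "\<dots> \<le> (((P+Q)/2)^2)^2" using PQ amgm2[of P Q] by (intro power_mono) auto
  also have "\<dots> = ((P+Q)/2)^4" by (simp add: power_mult[symmetric])
  also have "(P+Q)/2 = (a+b+c+d)/4" unfolding P_def Q_def by (simp add: field_simps)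
  finally show ?thesis .
qed

lemma det_Gm_le:
  assumes b: "b1 < 0" "b2 < 0" and des: "is_design {x. 0 \<le> fst x \<and> 0 \<le> snd x} S w"
  shows "det (Gm b1 b2 S w) \<le> 1/256"
proof -
  define G where "G = Gm b1 b2 S w"
  define A where "A = (\<lambda>i j. G $ i $ j)"
  have wpos: "\<forall>x\<in>S. 0 \<le> w x" and wsum: "(\<Sum>x\<in>S. w x) = 1"
    and sub: "S \<subseteq> {x. 0 \<le> fst x \<and> 0 \<le> snd x}"
    using des unfolding is_design_def by auto
  have detA: "det G = d4 A" unfolding A_def d4_def det_4 ..
  have sym: "A 2 1 = A 1 2" "A 3 1 = A 1 3" "A 4 1 = A 1 4" "A 3 2 = A 2 3" "A 4 2 = A 2 4" "A 4 3 = A 3 4"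
    unfolding A_def G_def Gm_entry by (simp_all add: mult.commute)
  have psd: "\<forall>x1 x2 x3 x4. qf4 A x1 x2 x3 x4 \<ge> 0"
    unfolding A_def G_def using Gm_psd[OF wpos] by blast
  note h = had4[OF sym psd]
  have tr: "A 1 1 + A 2 2 + A 3 3 + A 4 4 \<le> 1"
  proof -
    have "A 1 1 + A 2 2 + A 3 3 + A 4 4 = (\<Sum>x\<in>S. w x * (av b1 b2 x $ 1 * av b1 b2 x $ 1 + av b1 b2 x $ 2 * av b1 b2 x $ 2
       + av b1 b2 x $ 3 * av b1 b2 x $ 3 + av b1 b2 x $ 4 * av b1 b2 x $ 4))"
      unfolding A_def G_def Gm_entry by (simp add: sum.distrib[symmetric] algebra_simps)
    also have "\<dots> \<le> (\<Sum>x\<in>S. w x * 1)"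
    proof (rule sum_mono)
      fix x assume "x \<in> S"
      then show "w x * (av b1 b2 x $ 1 * av b1 b2 x $ 1 + av b1 b2 x $ 2 * av b1 b2 x $ 2
       + av b1 b2 x $ 3 * av b1 b2 x $ 3 + av b1 b2 x $ 4 * av b1 b2 x $ 4) \<le> w x * 1"
        using wpos sub av_norm[OF b, of x] by (intro mult_left_mono) auto
    qed
    finally show ?thesis using wsum by simp
  qed
  have "d4 A \<le> A 1 1 * A 2 2 * A 3 3 * A 4 4" by (rule h(1))
  also have "\<dots> \<le> ((A 1 1 + A 2 2 + A 3 3 + A 4 4)/4)^4" using h(2-5) by (rule amgm4)
  also have "\<dots> \<le> (1/4)^4" using tr h(2-5) by (intro power_mono) auto
  finally show ?thesis unfolding G_def[symmetric] detA by (simp add: power_divide)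
qed

lemma u_vals: "u0 0 = 1" "u1 0 = 0" "u0 2 = 0" "u1 2 = 1"
  by (simp_all add: u0_def u1_def exp_minus field_simps)

lemma det_Gm_opt:
  assumes b: "b1 < 0" "b2 < 0"
  shows "det (Gm b1 b2 {(0, 0), (2 / \<bar>b1\<bar>, 0), (0, 2 / \<bar>b2\<bar>), (2 / \<bar>b1\<bar>, 2 / \<bar>b2\<bar>)} (\<lambda>_. 1/4)) = 1/256"
proof -
  have p: "-b1 * (2 / \<bar>b1\<bar>) = 2" "-b2 * (2 / \<bar>b2\<bar>) = 2"
     "- (b1 * 2 / \<bar>b1\<bar>) = 2" "- (b2 * 2 / \<bar>b2\<bar>) = 2" using b by auto
  have a1: "av b1 b2 (0,0) = vector [1,0,0,0]" unfolding av_def by (simp add: u_vals)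
  have a2: "av b1 b2 (2 / \<bar>b1\<bar>, 0) = vector [0,1,0,0]" unfolding av_def by (simp add: u_vals p)
  have a3: "av b1 b2 (0, 2 / \<bar>b2\<bar>) = vector [0,0,1,0]" unfolding av_def by (simp add: u_vals p)
  have a4: "av b1 b2 (2 / \<bar>b1\<bar>, 2 / \<bar>b2\<bar>) = vector [0,0,0,1]" unfolding av_def by (simp add: u_vals p)
  have nz: "2 / \<bar>b1\<bar> \<noteq> 0" "2 / \<bar>b2\<bar> \<noteq> 0" using b by auto
  show ?thesis
    unfolding det_4 Gm_entry using nz by (simp add: a1 a2 a3 a4)
qed

lemma opt_design:
  assumes b: "b1 < 0" "b2 < 0"
  shows "is_design {x. 0 \<le> fst x \<and> 0 \<le> snd x} {(0, 0), (2 / \<bar>b1\<bar>, 0), (0, 2 / \<bar>b2\<bar>), (2 / \<bar>b1\<bar>, 2 / \<bar>b2\<bar>)} (\<lambda>_. 1/4)"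
proof -
  have nz: "2 / \<bar>b1\<bar> \<noteq> 0" "2 / \<bar>b2\<bar> \<noteq> 0" using b by auto
  show ?thesis unfolding is_design_def using nz by simp
qed

theorem theorem1:
  fixes b0 b1 b2 :: real
  assumes "b1 < 0" and "b2 < 0"
  shows "locally_D_optimal (vector [b0, b1, b2, 0])
           {x. 0 \<le> fst x \<and> 0 \<le> snd x}
           {(0, 0), (2 / \<bar>b1\<bar>, 0), (0, 2 / \<bar>b2\<bar>), (2 / \<bar>b1\<bar>, 2 / \<bar>b2\<bar>)}
           (\<lambda>_. 1 / 4)"
  unfolding locally_D_optimal_def
proof (intro conjI allI impI)
  show "is_design {x. 0 \<le> fst x \<and> 0 \<le> snd x} {(0, 0), (2 / \<bar>b1\<bar>, 0), (0, 2 / \<bar>b2\<bar>), (2 / \<bar>b1\<bar>, 2 / \<bar>b2\<bar>)} (\<lambda>_. 1 / 4)"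
    using opt_design[OF assms] by simp
  fix S' w' assume d: "is_design {x. 0 \<le> fst x \<and> 0 \<le> snd x} S' w'"
  define B where "B = Bm b0 b1 b2"
  have dB: "0 \<le> det B * det B" by simp
  have "det (info_matrix (vector [b0, b1, b2, 0]) S' w') = det B * det (Gm b1 b2 S' w') * det B"
    unfolding info_factor[OF assms] B_def det_mul det_transpose ..
  also have "\<dots> = (det B * det B) * det (Gm b1 b2 S' w')" by (simp add: ac_simps)
  also have "\<dots> \<le> (det B * det B) * (1/256)" using det_Gm_le[OF assms d] dB by (rule mult_left_mono)
  also have "\<dots> = det (info_matrix (vector [b0, b1, b2, 0])
           {(0, 0), (2 / \<bar>b1\<bar>, 0), (0, 2 / \<bar>b2\<bar>), (2 / \<bar>b1\<bar>, 2 / \<bar>b2\<bar>)} (\<lambda>_. 1 / 4))"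
    unfolding info_factor[OF assms] B_def[symmetric] det_mul det_transpose
    using det_Gm_opt[OF assms] by (simp add: ac_simps)
  finally show "det (info_matrix (vector [b0, b1, b2, 0]) S' w') \<le> det (info_matrix (vector [b0, b1, b2, 0])
           {(0, 0), (2 / \<bar>b1\<bar>, 0), (0, 2 / \<bar>b2\<bar>), (2 / \<bar>b1\<bar>, 2 / \<bar>b2\<bar>)} (\<lambda>_. 1 / 4))" .
qed

end
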